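(* Let $n\ge2$ and let $A\in\mathbb{R}^{n\times n}$ be conditionally negative definite. Let $\overline{A}=\frac12(A+A^T)$ and let $\lambda_2$ be the second largest eigenvalue (counting multiplicity) of $$D=\overline{A}-\frac1n\overline{A}\mathbf{1}\mathbf{1}^T-\frac1n\mathbf{1}\mathbf{1}^T\overline{A}+\frac{\mathbf{1}^TA\mathbf{1}}{n^2}\mathbf{1}\mathbf{1}^T.$$ Then $$\max_{\mathbf{x}\in\mathbb{R}^n,\ \mathbf{x}^T\mathbf{1}=0,\ \mathbf{x}\ne\mathbf{0}}\frac{\mathbf{x}^TA\mathbf{x}}{\mathbf{x}^T\mathbf{x}}=\lambda_2<0.$$
   Context: $\mathbf{1}\in\mathbb{R}^n$ is the all-ones vector. $A$ is conditionally negative definite if $\mathbf{y}^TA\mathbf{y}<0$ for all nonzero $\mathbf{y}\in\mathbb{R}^n$ with $\mathbf{1}^T\mathbf{y}=0$. *)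

theory Defs
  imports "Jordan_Normal_Form.Char_Poly" "HOL-Library.Multiset"
begin

definition ones_vec :: "nat \<Rightarrow> real vec" where
  "ones_vec n = vec n (\<lambda>_. 1)"

definition ones_mat :: "nat \<Rightarrow> real mat" where
  "ones_mat n = mat n n (\<lambda>_. 1)"

definition cond_neg_def :: "nat \<Rightarrow> real mat \<Rightarrow> bool" where
  "cond_neg_def n A \<longleftrightarrow> (\<forall>y \<in> carrier_vec n.
      ones_vec n \<bullet> y = 0 \<and> y \<noteq> 0\<^sub>v n \<longrightarrow> y \<bullet> (A *\<^sub>v y) < 0)"

text \<open>Eigenvalues counted with multiplicity: the roots of the characteristic polynomial,
  listed in decreasing order (for real symmetric matrices these are all n eigenvalues).\<close>
definition eigenvalues_desc :: "real mat \<Rightarrow> real list" where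
  "eigenvalues_desc M = rev (sorted_list_of_multiset (proots (char_poly M)))"

end

theory Submission imports Defs "HOL-Analysis.Function_Topology" begin
lemma sq_le_sum:
  fixes h :: "nat \<Rightarrow> real"
  assumes "i < n"
  shows "h i * h i \<le> (\<Sum>j<n. h j * h j)"
proof -
  have "(\<Sum>j\<in>{i}. h j * h j) \<le> (\<Sum>j<n. h j * h j)"
    by (rule sum_mono2) (use assms in auto)
  then show ?thesis by simp
qed

lemma exists_max:
  fixes m :: "nat \<Rightarrow> nat \<Rightarrow> real" and n :: nat
  assumes n: "2 \<le> n"
  shows "\<exists>g. (\<Sum>i<n. g i) = 0 \<and> (\<Sum>i<n. g i * g i) = 1 \<and>
     (\<forall>h. (\<Sum>i<n. h i) = 0 \<and> (\<Sum>i<n. h i * h i) = 1 \<longrightarrow>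
        (\<Sum>i<n. h i * (\<Sum>j<n. m i j * h j)) \<le> (\<Sum>i<n. g i * (\<Sum>j<n. m i j * g j)))"
proof -
  define qf where "qf = (\<lambda>h::nat\<Rightarrow>real. \<Sum>i<n. h i * (\<Sum>j<n. m i j * h j))"
  let ?X = "product_topology (\<lambda>_. euclideanreal) {..<n}"
  define K where "K = (PiE {..<n} (\<lambda>_. {-1..1::real}) \<inter> {g \<in> topspace ?X. (\<Sum>i<n. g i) \<in> {0}})
     \<inter> {g \<in> topspace ?X. (\<Sum>i<n. g i * g i) \<in> {1}}"
  have c1: "continuous_map ?X euclideanreal (\<lambda>g. \<Sum>i<n. g i)"
    by (intro continuous_intros) auto
  have c2: "continuous_map ?X euclideanreal (\<lambda>g. \<Sum>i<n. g i * g i)"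
    by (intro continuous_intros) auto
  have c3: "continuous_map ?X euclideanreal qf"
    unfolding qf_def by (intro continuous_intros) auto
  have "compactin ?X (PiE {..<n} (\<lambda>_. {-1..1::real}))"
    by (simp add: compactin_PiE)
  then have cK: "compactin ?X K"
    unfolding K_def
    by (intro compact_Int_closedin closedin_continuous_map_preimage[OF c1]
       closedin_continuous_map_preimage[OF c2]) auto
  have "compact (qf ` K)"
    using image_compactin[OF cK c3] compactin_euclidean_iff by blast
  moreover have "K \<noteq> {}"
  proof -
    obtain k where k: "n = Suc (Suc k)" using n by (metis add_2_eq_Suc le_Suc_ex)
    define a where "a = 1 / sqrt 2"
    define g0 where "g0 = restrict (\<lambda>i. if i = 0 then a else if i = 1 then -a else 0) {..<n}"
    have s1: "(\<Sum>i<n. g0 i) = 0" unfolding g0_def k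
      by (simp only: sum.lessThan_Suc_shift) simp
    have "a * a = 1/2" unfolding a_def by (simp add: field_simps)
    then have s2: "(\<Sum>i<n. g0 i * g0 i) = 1" unfolding g0_def k
      by (simp only: sum.lessThan_Suc_shift) simp
    have "a \<le> 1" unfolding a_def by (simp add: field_simps)
    moreover have "0 \<le> a" unfolding a_def by simp
    ultimately have "g0 \<in> K" unfolding K_def using s1 s2 by (auto simp: g0_def)
    then show ?thesis by blast
  qed
  ultimately obtain s where s: "s \<in> qf ` K" "\<And>t. t \<in> qf ` K \<Longrightarrow> t \<le> s"
    using compact_attains_sup by (metis image_is_empty)
  then obtain g where g: "g \<in> K" "s = qf g" by blast
  have gs: "(\<Sum>i<n. g i) = 0" "(\<Sum>i<n. g i * g i) = 1" using g(1) unfolding K_def by auto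
  show ?thesis
  proof (intro exI[of _ g] conjI gs allI impI)
    fix h :: "nat \<Rightarrow> real"
    assume h: "(\<Sum>i<n. h i) = 0 \<and> (\<Sum>i<n. h i * h i) = 1"
    define h' where "h' = restrict h {..<n}"
    have e1: "(\<Sum>i<n. h' i) = 0" using h unfolding h'_def by simp
    have e2: "(\<Sum>i<n. h' i * h' i) = 1" using h unfolding h'_def by simp
    have "\<bar>h i\<bar> \<le> 1" if "i < n" for i
    proof -
      have "h i * h i \<le> 1" using sq_le_sum[OF that, of h] h by simp
      then show ?thesis by (metis abs_le_square_iff abs_one mult_1 power2_eq_square)
    qed
    then have "h' \<in> K" unfolding K_def h'_def using e1 e2 h by (auto simp: abs_le_iff h'_def)
    then have "qf h' \<le> s" using s(2) by blast
    moreover have "qf h' = qf h" unfolding qf_def h'_def by simp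
    ultimately show "(\<Sum>i<n. h i * (\<Sum>j<n. m i j * h j)) \<le> (\<Sum>i<n. g i * (\<Sum>j<n. m i j * g j))"
      using g(2) unfolding qf_def by simp
  qed
qed
definition qf :: "(nat \<Rightarrow> nat \<Rightarrow> real) \<Rightarrow> nat \<Rightarrow> (nat \<Rightarrow> real) \<Rightarrow> real" where
  "qf m n h = (\<Sum>i<n. h i * (\<Sum>j<n. m i j * h j))"

lemma qf_transpose: "qf (\<lambda>i j. m j i) n h = qf m n h"
proof -
  have "qf (\<lambda>i j. m j i) n h = (\<Sum>i<n. \<Sum>j<n. h i * m j i * h j)"
    unfolding qf_def by (simp add: sum_distrib_left mult.assoc)
  also have "\<dots> = (\<Sum>j<n. \<Sum>i<n. h i * m j i * h j)" by (rule sum.swap)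
  also have "\<dots> = qf m n h"
    unfolding qf_def by (simp add: sum_distrib_left algebra_simps)
  finally show ?thesis .
qed

lemma qf_add: "qf (\<lambda>i j. m i j + m' i j) n h = qf m n h + qf m' n h"
  unfolding qf_def by (simp add: algebra_simps sum.distrib)

lemma qf_cmult: "qf (\<lambda>i j. c * m i j) n h = c * qf m n h"
  unfolding qf_def by (simp add: sum_distrib_left algebra_simps)

lemma qf_sym_part: "qf (\<lambda>i j. (m i j + m j i) / 2) n h = qf m n h"
proof -
  have e: "(\<lambda>i j. (m i j + m j i) / 2) = (\<lambda>i j. (1/2) * m i j + (1/2) * m j i)"
    by (auto simp: fun_eq_iff)
  have "qf (\<lambda>i j. (m i j + m j i) / 2) n h = (1/2) * qf m n h + (1/2) * qf (\<lambda>i j. m j i) n h"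
    unfolding e by (simp only: qf_add qf_cmult)
  then show ?thesis using qf_transpose[of m n h] by simp
qed

lemma qf_shift:
  assumes h: "(\<Sum>i<n. h i) = 0"
  shows "qf (\<lambda>i j. m i j - u i - v j + c) n h = qf m n h"
proof -
  define K where "K = (\<Sum>j<n. v j * h j)"
  have "(\<Sum>j<n. (m i j - u i - v j + c) * h j) = (\<Sum>j<n. m i j * h j) - u i * (\<Sum>j<n. h j) - K + c * (\<Sum>j<n. h j)" for i
  proof -
    have "(\<Sum>j<n. (m i j - u i - v j + c) * h j) = (\<Sum>j<n. m i j * h j - u i * h j - v j * h j + c * h j)"
      by (rule sum.cong) (auto simp: algebra_simps)
    also have "\<dots> = (\<Sum>j<n. m i j * h j) - (\<Sum>j<n. u i * h j) - (\<Sum>j<n. v j * h j) + (\<Sum>j<n. c * h j)"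
      by (simp only: sum.distrib sum_subtractf)
    finally show ?thesis unfolding K_def by (simp only: sum_distrib_left)
  qed
  then have "qf (\<lambda>i j. m i j - u i - v j + c) n h = (\<Sum>i<n. h i * ((\<Sum>j<n. m i j * h j) - K))"
    unfolding qf_def using h by simp
  also have "\<dots> = (\<Sum>i<n. h i * (\<Sum>j<n. m i j * h j) - K * h i)"
    by (rule sum.cong) (auto simp: algebra_simps)
  also have "\<dots> = qf m n h - K * (\<Sum>i<n. h i)"
    unfolding qf_def by (simp only: sum_subtractf sum_distrib_left)
  finally show ?thesis using h by simp
qed

lemma qf_scale: "qf m n (\<lambda>i. c * h i) = c * c * qf m n h"
proof -
  have inner: "(\<Sum>j<n. m i j * (c * h j)) = c * (\<Sum>j<n. m i j * h j)" for i
    by (simp add: sum_distrib_left mult.left_commute)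
  have "qf m n (\<lambda>i. c * h i) = (\<Sum>i<n. (c * c) * (h i * (\<Sum>j<n. m i j * h j)))"
    unfolding qf_def inner by (rule sum.cong) (simp_all add: mult_ac)
  also have "\<dots> = c * c * qf m n h" unfolding qf_def by (simp only: sum_distrib_left)
  finally show ?thesis .
qed

lemma qf_expand:
  assumes sym: "\<And>i j. m i j = m j i"
  shows "qf m n (\<lambda>i. x i + t * y i) = qf m n x + 2 * t * (\<Sum>i<n. y i * (\<Sum>j<n. m i j * x j)) + t * t * qf m n y"
proof -
  define Sx where "Sx i = (\<Sum>j<n. m i j * x j)" for i
  define Sy where "Sy i = (\<Sum>j<n. m i j * y j)" for i
  have swap: "(\<Sum>i<n. x i * Sy i) = (\<Sum>i<n. y i * Sx i)"
  proof -
    have "(\<Sum>i<n. x i * Sy i) = (\<Sum>i<n. \<Sum>j<n. x i * m i j * y j)"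
      unfolding Sy_def by (simp add: sum_distrib_left mult.assoc)
    also have "\<dots> = (\<Sum>j<n. \<Sum>i<n. x i * m i j * y j)" by (rule sum.swap)
    also have "\<dots> = (\<Sum>j<n. \<Sum>i<n. y j * (m j i * x i))"
      by (intro sum.cong refl) (simp add: sym mult_ac)
    also have "\<dots> = (\<Sum>i<n. y i * Sx i)"
      unfolding Sx_def by (simp only: sum_distrib_left)
    finally show ?thesis .
  qed
  have inner: "(\<Sum>j<n. m i j * (x j + t * y j)) = Sx i + t * Sy i" for i
    unfolding Sx_def Sy_def
    by (simp add: distrib_left sum.distrib sum_distrib_left mult.left_commute)
  have "qf m n (\<lambda>i. x i + t * y i) = (\<Sum>i<n. x i * Sx i + t * (x i * Sy i) + t * (y i * Sx i) + (t * t) * (y i * Sy i))"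
    unfolding qf_def inner by (rule sum.cong) (simp_all add: algebra_simps)
  also have "\<dots> = (\<Sum>i<n. x i * Sx i) + t * (\<Sum>i<n. x i * Sy i) + t * (\<Sum>i<n. y i * Sx i) + (t * t) * (\<Sum>i<n. y i * Sy i)"
    by (simp only: sum.distrib sum_distrib_left)
  also have "\<dots> = qf m n x + 2 * t * (\<Sum>i<n. y i * Sx i) + t * t * qf m n y"
    using swap unfolding qf_def Sx_def Sy_def by simp
  finally show ?thesis unfolding Sx_def .
qed

lemma quad_nonpos:
  fixes c K :: real
  assumes "\<And>t. 2 * t * c + t * t * K \<le> 0"
  shows "c \<le> 0"
proof (rule ccontr)
  assume "\<not> c \<le> 0"
  hence c: "c > 0" by simp
  define t where "t = c / (\<bar>K\<bar> + 1)"
  have t: "t > 0" using c unfolding t_def by (simp add: add_pos_nonneg)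
  have "t * \<bar>K\<bar> < c" unfolding t_def using c by (simp add: field_simps)
  moreover have "- \<bar>K\<bar> \<le> K" by (cases "K \<ge> 0") auto
  then have "t * (- \<bar>K\<bar>) \<le> t * K" using t by (intro mult_left_mono) auto
  ultimately have "2 * c + t * K > 0" using c by linarith
  hence "t * (2 * c + t * K) > 0" using t by simp
  with assms[of t] show False by (simp add: algebra_simps)
qed

lemma quad_vec:
  assumes A: "A \<in> carrier_mat n n" and x: "x \<in> carrier_vec n"
  and y: "y \<in> carrier_vec n"
  shows "x \<bullet> (A *\<^sub>v y) = (\<Sum>i<n. x $ i * (\<Sum>j<n. A $$ (i,j) * y $ j))"
  using A x y by (simp add: scalar_prod_def atLeast0LessThan)

lemma mult_vec_entry:
  assumes A: "A \<in> carrier_mat n n" and y: "y \<in> carrier_vec n" and i: "i < n"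
  shows "(A *\<^sub>v y) $ i = (\<Sum>j<n. A $$ (i,j) * y $ j)"
  using A y i by (simp add: scalar_prod_def atLeast0LessThan)

lemma D_entry:
  fixes A :: "real mat"
  assumes A: "A \<in> carrier_mat n n" and i: "i < n" and j: "j < n"
  defines "Abar \<equiv> (1/2) \<cdot>\<^sub>m (A + transpose_mat A)"
  defines "D \<equiv> Abar - (1 / real n) \<cdot>\<^sub>m (Abar * ones_mat n)
                 - (1 / real n) \<cdot>\<^sub>m (ones_mat n * Abar)
                 + ((ones_vec n \<bullet> (A *\<^sub>v ones_vec n)) / (real n)^2) \<cdot>\<^sub>m ones_mat n"
  shows "D \<in> carrier_mat n n"
    "D $$ (i,j) = (A$$(i,j) + A$$(j,i))/2 - (\<Sum>k<n. (A$$(i,k) + A$$(k,i))/2) / n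
        - (\<Sum>k<n. (A$$(j,k) + A$$(k,j))/2) / n + (\<Sum>k<n. \<Sum>l<n. A$$(k,l)) / (real n)^2"
proof -
  show "D \<in> carrier_mat n n" unfolding D_def Abar_def ones_mat_def using A by auto
  show "D $$ (i,j) = (A$$(i,j) + A$$(j,i))/2 - (\<Sum>k<n. (A$$(i,k) + A$$(k,i))/2) / n
        - (\<Sum>k<n. (A$$(j,k) + A$$(k,j))/2) / n + (\<Sum>k<n. \<Sum>l<n. A$$(k,l)) / (real n)^2"
    unfolding D_def Abar_def ones_mat_def ones_vec_def using A i j
    apply (simp add: scalar_prod_def  mult_mat_vec_def  atLeast0LessThan)
    apply (intro sum.cong refl)
    by (simp add: add.commute)
qed
lemma qf_cong: "(\<And>i. i < n \<Longrightarrow> h i = h' i) \<Longrightarrow> qf m n h = qf m n h'"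
  unfolding qf_def by (intro sum.cong refl) auto

lemma sum_sq_zero:
  fixes h :: "nat \<Rightarrow> real"
  assumes "(\<Sum>i<n. h i * h i) = 0" and "i < n"
  shows "h i = 0"
proof -
  have "\<forall>i\<in>{..<n}. h i * h i = 0"
    using assms(1) by (subst sum_nonneg_eq_0_iff[symmetric]) auto
  then show ?thesis using assms(2) by auto
qed

lemma desc_second:
  fixes Q :: "real multiset" and mu :: real
  assumes le: "\<forall>x\<in>#Q. x \<le> mu" and mem: "mu \<in># Q" and neg: "mu < 0"
  shows "rev (sorted_list_of_multiset (add_mset 0 Q)) ! 1 = mu"
proof -
  define ys where "ys = sorted_list_of_multiset Q"
  have sys: "sorted ys" and mys: "mset ys = Q" unfolding ys_def by auto
  have setys: "set ys = set_mset Q" using mys by (metis set_mset_mset)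
  have "sorted (ys @ [0])" using sys le neg setys by (auto simp: sorted_append)
  moreover have "mset (ys @ [0]) = add_mset 0 Q" using mys by simp
  ultimately have "sorted_list_of_multiset (add_mset 0 Q) = ys @ [0]"
    by (metis sorted_list_of_multiset_mset sorted_sort_id)
  then have "rev (sorted_list_of_multiset (add_mset 0 Q)) ! 1 = last ys"
    using mem setys by (cases ys rule: rev_cases) auto
  moreover have "last ys = mu"
  proof -
    have ne: "ys \<noteq> []" using mem setys by auto
    then have "last ys \<in> set ys" by simp
    then have "last ys \<le> mu" using le setys by auto
    moreover have "mu \<le> last ys"
    proof -
      obtain zs where zs: "ys = zs @ [last ys]" using ne by (metis append_butlast_last_id)
      have "\<forall>x\<in>set zs. x \<le> last ys" using sys zs by (metis sorted_append list.set_intros(1))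
      moreover have "mu \<in> set ys" using mem setys by simp
      ultimately show ?thesis using zs by (metis Un_iff empty_iff empty_set list.set_intros(1) order_refl set_ConsD set_append)
    qed
    ultimately show ?thesis by simp
  qed
  ultimately show ?thesis by simp
qed

lemma sum_T:
  fixes f :: "nat \<Rightarrow> real"
  assumes i: "i < n"
  shows "(\<Sum>l<n. (if l = 0 then (if i = 0 then 1 else -1) else if i = l then 1 else 0) * f l)
     = (if i = 0 then f 0 else f i - f 0)"
proof -
  obtain m where m: "n = Suc m" using i by (cases n) auto
  have "(\<Sum>l<n. (if l = 0 then (if i = 0 then 1 else -1) else if i = l then 1 else 0) * f l)
     = (if i = 0 then 1 else -1) * f 0 + (\<Sum>l<m. (if i = Suc l then f (Suc l) else 0))"
    unfolding m by (simp only: sum.lessThan_Suc_shift) (auto intro!: sum.cong)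
  also have "(\<Sum>l<m. (if i = Suc l then f (Suc l) else 0)) = (if i = 0 then 0 else f i)"
  proof (cases i)
    case 0 then show ?thesis by simp
  next
    case (Suc i')
    then have "i' < m" using i m by simp
    then show ?thesis using Suc by (simp add: sum.delta)
  qed
  finally show ?thesis by simp
qed

lemma sum_S:
  fixes f :: "nat \<Rightarrow> real"
  assumes j: "j < n"
  shows "(\<Sum>k<n. f k * (if j = 0 then 1 else if k = j then 1 else 0)) = (if j = 0 then (\<Sum>k<n. f k) else f j)"
  using j by (cases "j = 0") (simp_all add: if_distrib sum.delta' cong: if_cong)

lemma charpoly_factor:
  fixes D :: "real mat" and d :: "nat \<Rightarrow> nat \<Rightarrow> real"
  assumes Dc: "D \<in> carrier_mat n n" and Dij: "\<And>i j. i < n \<Longrightarrow> j < n \<Longrightarrow> D $$ (i,j) = d i j"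
    and drow: "\<And>i. (\<Sum>j<n. d i j) = 0" and dcol: "\<And>j. (\<Sum>i<n. d i j) = 0"
    and n0: "n > 0"
    and nokernel: "\<And>u. (\<Sum>i<n. u i) = 0 \<Longrightarrow> (\<And>i. i < n \<Longrightarrow> (\<Sum>j<n. d i j * u j) = 0) \<Longrightarrow> (\<forall>i<n. u i = 0)"
  shows "\<exists>q. char_poly D = monom 1 1 * q \<and> poly q 0 \<noteq> 0"
proof -
  define S :: "real mat" where "S = mat n n (\<lambda>(i,j). if j = 0 then 1 else if i = j then 1 else 0)"
  define T :: "real mat" where "T = mat n n (\<lambda>(i,j). if j = 0 then (if i = 0 then 1 else -1) else if i = j then 1 else 0)"
  have Sc: "S \<in> carrier_mat n n" and Tc: "T \<in> carrier_mat n n" unfolding S_def T_def by auto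
  have TS: "T * S = 1\<^sub>m n"
  proof (rule eq_matI)
    fix i j assume i: "i < dim_row (1\<^sub>m n)" and j: "j < dim_col (1\<^sub>m n)"
    then have i: "i < n" and j: "j < n" by auto
    have "(T * S) $$ (i,j) = (\<Sum>l<n. T $$ (i,l) * S $$ (l,j))"
      using Sc Tc i j by (simp add: scalar_prod_def atLeast0LessThan)
    also have "\<dots> = (\<Sum>l<n. (if l = 0 then (if i = 0 then 1 else -1) else if i = l then 1 else 0) * S $$ (l,j))"
      using i by (intro sum.cong refl) (simp add: T_def)
    also have "\<dots> = (if i = 0 then S $$ (0,j) else S $$ (i,j) - S $$ (0,j))" by (rule sum_T[OF i])
    also have "\<dots> = 1\<^sub>m n $$ (i,j)" using i j n0 by (simp add: S_def)
    finally show "(T * S) $$ (i,j) = 1\<^sub>m n $$ (i,j)" .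
  qed (use Sc Tc in auto)
  have ST: "S * T = 1\<^sub>m n" using mat_mult_left_right_inverse[OF Tc Sc TS] .
  define B where "B = T * (D * S)"
  have DSc: "D * S \<in> carrier_mat n n" using Dc Sc by simp
  have Bc: "B \<in> carrier_mat n n" unfolding B_def using Tc DSc by simp
  have DS: "(D * S) $$ (l,j) = (if j = 0 then 0 else d l j)" if l: "l < n" and j: "j < n" for l j
  proof -
    have "(D * S) $$ (l,j) = (\<Sum>k<n. D $$ (l,k) * S $$ (k,j))"
      using Sc Dc l j by (simp add: scalar_prod_def atLeast0LessThan)
    also have "\<dots> = (\<Sum>k<n. d l k * (if j = 0 then 1 else if k = j then 1 else 0))"
      using l j by (intro sum.cong refl) (simp add: S_def Dij)
    also have "\<dots> = (if j = 0 then 0 else d l j)" using sum_S[OF j, of "d l"] drow by simp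
    finally show ?thesis .
  qed
  have Bij: "B $$ (i,j) = (if j = 0 then 0 else if i = 0 then d 0 j else d i j - d 0 j)"
    if i: "i < n" and j: "j < n" for i j
  proof -
    have "B $$ (i,j) = row T i \<bullet> col (D * S) j"
      unfolding B_def using Tc DSc i j by (subst index_mult_mat(1)) auto
    also have "\<dots> = (\<Sum>l<n. T $$ (i,l) * (D * S) $$ (l,j))"
      using Tc DSc Dc Sc i j by (simp add: scalar_prod_def atLeast0LessThan)
    also have "\<dots> = (\<Sum>l<n. (if l = 0 then (if i = 0 then 1 else -1) else if i = l then 1 else 0) * (D * S) $$ (l,j))"
      using i by (intro sum.cong refl) (simp add: T_def)
    also have "\<dots> = (if i = 0 then (D * S) $$ (0,j) else (D * S) $$ (i,j) - (D * S) $$ (0,j))" by (rule sum_T[OF i])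
    also have "\<dots> = (if j = 0 then 0 else if i = 0 then d 0 j else d i j - d 0 j)" using DS i j n0 by simp
    finally show ?thesis .
  qed
  have sim: "similar_mat D B"
  proof -
    have "S * B = D * S"
      unfolding B_def using assoc_mult_mat[OF Sc Tc DSc] ST left_mult_one_mat[OF DSc] by simp
    then have "S * B * T = D * S * T" by simp
    also have "\<dots> = D" using assoc_mult_mat[OF Dc Sc Tc] ST right_mult_one_mat[OF Dc] by simp
    finally have "D = S * B * T" by simp
    then have "similar_mat_wit D B S T"
      unfolding similar_mat_wit_def using Dc Bc Sc Tc ST TS by (auto simp: Let_def)
    then show ?thesis unfolding similar_mat_def by blast
  qed
  define B3 where "B3 = mat_delete B 0 0"
  have B3c: "B3 \<in> carrier_mat (n - 1) (n - 1)" unfolding B3_def using Bc by (simp add: mat_delete_def)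
  have B3ij: "B3 $$ (i,j) = d (Suc i) (Suc j) - d 0 (Suc j)" if "i < n - 1" "j < n - 1" for i j
    unfolding B3_def using that Bc Bij[of "Suc i" "Suc j"] by (simp add: mat_delete_def)
  have "char_poly D = char_poly B" by (rule char_poly_similar[OF sim])
  also have "\<dots> = monom 1 1 * char_poly B3"
    unfolding B3_def by (rule char_poly_0_column[OF _ Bc n0]) (simp add: Bij n0)
  finally have cp: "char_poly D = monom 1 1 * char_poly B3" .
  have "poly (char_poly B3) 0 \<noteq> 0"
  proof
    assume "poly (char_poly B3) 0 = 0"
    then have "eigenvalue B3 0" using eigenvalue_root_char_poly[OF B3c] by simp
    then obtain z where z: "z \<in> carrier_vec (n - 1)" "z \<noteq> 0\<^sub>v (n - 1)" "B3 *\<^sub>v z = 0 \<cdot>\<^sub>v z"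
      unfolding eigenvalue_def eigenvector_def using B3c by auto
    obtain m where m: "n = Suc m" using n0 by (cases n) auto
    have zc: "z \<in> carrier_vec m" using z(1) m by simp
    have B3z: "(\<Sum>j<m. (d (Suc i) (Suc j) - d 0 (Suc j)) * z $ j) = 0" if i: "i < m" for i
    proof -
      have "(B3 *\<^sub>v z) $ i = (\<Sum>j<m. B3 $$ (i,j) * z $ j)"
        using B3c zc i m by (simp add: scalar_prod_def atLeast0LessThan)
      also have "\<dots> = (\<Sum>j<m. (d (Suc i) (Suc j) - d 0 (Suc j)) * z $ j)"
        using i m by (intro sum.cong refl) (simp add: B3ij)
      finally show ?thesis using z(3) i zc by simp
    qed
    define w where "w i = (if i = 0 then 0 else z $ (i - 1))" for i
    define E where "E i = (\<Sum>j<n. d i j * w j)" for i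
    have Ew: "E i = (\<Sum>j<m. d i (Suc j) * z $ j)" for i
      unfolding E_def m by (simp only: sum.lessThan_Suc_shift) (simp add: w_def)
    have Eeq: "E i = E 0" if i: "i < n" for i
    proof (cases i)
      case 0 then show ?thesis by simp
    next
      case (Suc i')
      then have i': "i' < m" using i m by simp
      have "E i - E 0 = (\<Sum>j<m. (d (Suc i') (Suc j) - d 0 (Suc j)) * z $ j)"
        unfolding Ew Suc by (simp add: sum_subtractf left_diff_distrib)
      then show ?thesis using B3z[OF i'] by simp
    qed
    have "(\<Sum>i<n. E i) = (\<Sum>j<n. (\<Sum>i<n. d i j) * w j)"
      unfolding E_def by (subst sum.swap) (simp add: sum_distrib_right)
    then have "(\<Sum>i<n. E i) = 0" using dcol by simp
    moreover have "(\<Sum>i<n. E i) = (\<Sum>i<n. E 0)" by (rule sum.cong) (auto intro: Eeq)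
    ultimately have "real n * E 0 = 0" by simp
    then have E00: "E 0 = 0" using n0 by simp
    have E0: "E i = 0" if "i < n" for i using Eeq[OF that] E00 by simp
    define u where "u i = w i - (\<Sum>k<n. w k) / real n" for i
    have usum: "(\<Sum>i<n. u i) = 0" unfolding u_def using n0 by (simp add: sum_subtractf)
    have "(\<Sum>j<n. d i j * u j) = 0" if i: "i < n" for i
    proof -
      define W where "W = (\<Sum>k<n. w k) / real n"
      have "(\<Sum>j<n. d i j * u j) = (\<Sum>j<n. d i j * w j - W * d i j)"
        by (intro sum.cong refl) (simp add: u_def W_def algebra_simps)
      also have "\<dots> = E i - W * (\<Sum>j<n. d i j)"
        unfolding E_def by (simp add: sum_subtractf sum_distrib_left)
      finally have "(\<Sum>j<n. d i j * u j) = E i - W * (\<Sum>j<n. d i j)" .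
      then show ?thesis using E0[OF i] drow by simp
    qed
    then have u0: "\<forall>i<n. u i = 0" using nokernel[OF usum] by blast
    then have "u 0 = 0" using n0 by simp
    then have ws: "(\<Sum>k<n. w k) = 0" unfolding u_def using n0 by (simp add: w_def)
    have "z = 0\<^sub>v (n - 1)"
    proof (rule eq_vecI)
      show "dim_vec z = dim_vec (0\<^sub>v (n - 1))" using z(1) by simp
      fix j assume "j < dim_vec (0\<^sub>v (n - 1))"
      then have j: "Suc j < n" by simp
      have "u (Suc j) = 0" using u0 j by simp
      then show "z $ j = 0\<^sub>v (n - 1) $ j" using ws j unfolding u_def w_def by simp
    qed
    then show False using z(2) by simp
  qed
  then show ?thesis using cp by blast
qed

theorem lemma2p1:
  fixes n :: nat and A :: "real mat"
  assumes "n \<ge> 2" and "A \<in> carrier_mat n n" and "cond_neg_def n A"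
  defines "Abar \<equiv> (1/2) \<cdot>\<^sub>m (A + transpose_mat A)"
  defines "D \<equiv> Abar - (1 / real n) \<cdot>\<^sub>m (Abar * ones_mat n)
                 - (1 / real n) \<cdot>\<^sub>m (ones_mat n * Abar)
                 + ((ones_vec n \<bullet> (A *\<^sub>v ones_vec n)) / (real n)^2) \<cdot>\<^sub>m ones_mat n"
  defines "lam2 \<equiv> eigenvalues_desc D ! 1"
  shows "(\<exists>x \<in> carrier_vec n. x \<bullet> ones_vec n = 0 \<and> x \<noteq> 0\<^sub>v n \<and>
            (x \<bullet> (A *\<^sub>v x)) / (x \<bullet> x) = lam2)
       \<and> (\<forall>x \<in> carrier_vec n. x \<bullet> ones_vec n = 0 \<and> x \<noteq> 0\<^sub>v n \<longrightarrow>
            (x \<bullet> (A *\<^sub>v x)) / (x \<bullet> x) \<le> lam2)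
       \<and> lam2 < 0"
proof -
  note n2 = assms(1) and A = assms(2) and cnd = assms(3)
  have n0: "n > 0" using n2 by simp
  define a where "a = (\<lambda>i j. A $$ (i,j))"
  define ab where "ab = (\<lambda>i j. (a i j + a j i) / 2)"
  define r where "r = (\<lambda>i. \<Sum>k<n. ab i k)"
  define s where "s = (\<Sum>k<n. \<Sum>l<n. a k l)"
  define d where "d = (\<lambda>i j. ab i j - r i / real n - r j / real n + s / (real n)^2)"
  have Dc: "D \<in> carrier_mat n n"
    unfolding D_def Abar_def using D_entry(1)[OF A] n0 by (metis neq0_conv)
  have Dij: "D $$ (i,j) = d i j" if "i < n" "j < n" for i j
    unfolding D_def Abar_def d_def ab_def r_def s_def a_def by (rule D_entry(2)[OF A that])
  have dsym: "d i j = d j i" for i j unfolding d_def ab_def by simp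
  have rs: "(\<Sum>j<n. r j) = s"
  proof -
    have "(\<Sum>j<n. r j) = (\<Sum>j<n. \<Sum>k<n. a j k) / 2 + (\<Sum>j<n. \<Sum>k<n. a k j) / 2"
      unfolding r_def ab_def by (simp add: sum.distrib sum_divide_distrib add_divide_distrib)
    also have "(\<Sum>j<n. \<Sum>k<n. a k j) = s" unfolding s_def by (rule sum.swap)
    finally show ?thesis unfolding s_def by simp
  qed
  have drow: "(\<Sum>j<n. d i j) = 0" for i
  proof -
    have "(\<Sum>j<n. d i j) = r i - real n * (r i / real n) - (\<Sum>j<n. r j) / real n + real n * (s / (real n)^2)"
      unfolding d_def by (simp add: sum.distrib sum_subtractf sum_divide_distrib r_def)
    then show ?thesis using n0 rs by (simp add: field_simps power2_eq_square)
  qed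
  have dcol: "(\<Sum>i<n. d i j) = 0" for j using drow[of j] dsym by simp
  have qfd: "qf d n h = qf a n h" if h: "(\<Sum>i<n. h i) = 0" for h
  proof -
    have "qf d n h = qf (\<lambda>i j. ab i j - r i / real n - r j / real n + s / (real n)^2) n h"
      unfolding d_def ..
    also have "\<dots> = qf ab n h" by (rule qf_shift[OF h])
    also have "\<dots> = qf a n h" unfolding ab_def by (rule qf_sym_part)
    finally show ?thesis .
  qed
  have quadv: "x \<bullet> (A *\<^sub>v x) = qf a n (\<lambda>i. x $ i)" if "x \<in> carrier_vec n" for x
    unfolding qf_def a_def by (rule quad_vec[OF A that that])
  have Dv: "(D *\<^sub>v v) $ i = (\<Sum>j<n. d i j * v $ j)" if "v \<in> carrier_vec n" "i < n" for v i
    using mult_vec_entry[OF Dc that] Dij[OF that(2)] by simp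
  have ones: "x \<bullet> ones_vec n = (\<Sum>i<n. x $ i)" if "x \<in> carrier_vec n" for x
    using that unfolding ones_vec_def by (simp add: scalar_prod_def atLeast0LessThan)
  have sqv: "x \<bullet> x = (\<Sum>i<n. x $ i * x $ i)" if "x \<in> carrier_vec n" for x
    using that by (simp add: scalar_prod_def atLeast0LessThan)
  obtain g where g1: "(\<Sum>i<n. g i) = 0" and g2: "(\<Sum>i<n. g i * g i) = 1"
    and gmax: "\<And>h. (\<Sum>i<n. h i) = 0 \<Longrightarrow> (\<Sum>i<n. h i * h i) = 1 \<Longrightarrow> qf a n h \<le> qf a n g"
    using exists_max[OF n2, of a] unfolding qf_def by blast
  define mu where "mu = qf a n g"
  have Rf: "qf a n h \<le> mu * (\<Sum>i<n. h i * h i)" if h: "(\<Sum>i<n. h i) = 0" for h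
  proof (cases "(\<Sum>i<n. h i * h i) = 0")
    case True
    then have "qf a n h = qf a n (\<lambda>_. 0)" by (intro qf_cong) (rule sum_sq_zero[OF True])
    then show ?thesis using True by (simp add: qf_def)
  next
    case False
    define N where "N = (\<Sum>i<n. h i * h i)"
    have "N \<ge> 0" unfolding N_def by (simp add: sum_nonneg)
    then have Npos: "N > 0" using False unfolding N_def by simp
    define c where "c = 1 / sqrt N"
    have cc: "c * c = 1 / N" unfolding c_def using Npos by (simp add: field_simps)
    have "(\<Sum>i<n. c * h i) = 0" using h by (simp add: sum_distrib_left[symmetric])
    moreover have "(\<Sum>i<n. c * h i * (c * h i)) = 1"
    proof -
      have "(\<Sum>i<n. c * h i * (c * h i)) = (c * c) * N"
        unfolding N_def by (simp add: sum_distrib_left mult_ac)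
      then show ?thesis using cc Npos by simp
    qed
    ultimately have "qf a n (\<lambda>i. c * h i) \<le> mu" using gmax unfolding mu_def by simp
    then have "qf a n h / N \<le> mu" using cc qf_scale[of a n c h] by simp
    then show ?thesis using Npos unfolding N_def[symmetric] by (simp add: field_simps)
  qed
  have gvec: "vec n g \<in> carrier_vec n" by simp
  have gne: "vec n g \<noteq> 0\<^sub>v n"
  proof
    assume "vec n g = 0\<^sub>v n"
    then have "\<And>i. i < n \<Longrightarrow> g i = 0"
    proof -
      fix i assume i: "i < n"
      have "vec n g $ i = 0\<^sub>v n $ i" using \<open>vec n g = 0\<^sub>v n\<close> by simp
      then show "g i = 0" using i by simp
    qed
    then have "(\<Sum>i<n. g i * g i) = 0" by simp
    then show False using g2 by simp
  qed
  have gq: "qf a n (\<lambda>i. vec n g $ i) = qf a n g" by (intro qf_cong) simp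
  have mu_neg: "mu < 0"
  proof -
    have o: "ones_vec n \<bullet> vec n g = 0"
      using g1 by (simp add: ones_vec_def scalar_prod_def atLeast0LessThan)
    have "vec n g \<bullet> (A *\<^sub>v vec n g) < 0"
      using cnd o gvec gne unfolding cond_neg_def_def by blast
    then show ?thesis using quadv[OF gvec] gq unfolding mu_def by simp
  qed
  have eig_mu: "D *\<^sub>v vec n g = mu \<cdot>\<^sub>v vec n g"
  proof -
    define y where "y i = (\<Sum>j<n. d i j * g j) - mu * g i" for i
    have ysum: "(\<Sum>i<n. y i) = 0"
    proof -
      have "(\<Sum>i<n. \<Sum>j<n. d i j * g j) = (\<Sum>j<n. (\<Sum>i<n. d i j) * g j)"
        by (subst sum.swap) (simp add: sum_distrib_right)
      then have "(\<Sum>i<n. \<Sum>j<n. d i j * g j) = 0" using dcol by simp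
      then show ?thesis unfolding y_def using g1 by (simp add: sum_subtractf sum_distrib_left[symmetric])
    qed
    have qdg: "qf d n g = mu" using qfd[OF g1] unfolding mu_def .
    have key: "2 * t * (\<Sum>i<n. y i * y i) + t * t * (qf d n y - mu * (\<Sum>i<n. y i * y i)) \<le> 0" for t
    proof -
      have s0: "(\<Sum>i<n. g i + t * y i) = 0" using g1 ysum by (simp add: sum.distrib sum_distrib_left[symmetric])
      have "qf d n (\<lambda>i. g i + t * y i) \<le> mu * (\<Sum>i<n. (g i + t * y i) * (g i + t * y i))"
        using qfd[OF s0] Rf[OF s0] by simp
      moreover have "qf d n (\<lambda>i. g i + t * y i) = mu + 2 * t * (\<Sum>i<n. y i * (\<Sum>j<n. d i j * g j)) + t * t * qf d n y"
        using qf_expand[of d n g t y] dsym qdg by simp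
      moreover have "(\<Sum>i<n. (g i + t * y i) * (g i + t * y i)) = 1 + 2 * t * (\<Sum>i<n. y i * g i) + t * t * (\<Sum>i<n. y i * y i)"
      proof -
        have "(\<Sum>i<n. (g i + t * y i) * (g i + t * y i)) = (\<Sum>i<n. g i * g i) + 2 * t * (\<Sum>i<n. y i * g i) + t * t * (\<Sum>i<n. y i * y i)"
          by (simp add: algebra_simps sum.distrib sum_distrib_left)
        then show ?thesis using g2 by simp
      qed
      moreover have "(\<Sum>i<n. y i * (\<Sum>j<n. d i j * g j)) = (\<Sum>i<n. y i * y i) + mu * (\<Sum>i<n. y i * g i)"
        unfolding y_def by (simp add: algebra_simps sum.distrib sum_distrib_left sum_subtractf)
      ultimately show ?thesis by (simp add: algebra_simps)
    qed
    have "(\<Sum>i<n. y i * y i) \<le> 0" by (rule quad_nonpos[OF key])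
    moreover have "(\<Sum>i<n. y i * y i) \<ge> 0" by (simp add: sum_nonneg)
    ultimately have y0: "y i = 0" if "i < n" for i using sum_sq_zero that by (metis order_antisym)
    show ?thesis
    proof (rule eq_vecI)
      show "dim_vec (D *\<^sub>v vec n g) = dim_vec (mu \<cdot>\<^sub>v vec n g)" using Dc by simp
      fix i assume "i < dim_vec (mu \<cdot>\<^sub>v vec n g)"
      then have i: "i < n" by simp
      have "(D *\<^sub>v vec n g) $ i = (\<Sum>j<n. d i j * g j)" using Dv[OF gvec i] by simp
      also have "\<dots> = mu * g i" using y0[OF i] unfolding y_def by simp
      finally show "(D *\<^sub>v vec n g) $ i = (mu \<cdot>\<^sub>v vec n g) $ i" using i by simp
    qed
  qed
  have root_mu: "poly (char_poly D) mu = 0"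
  proof -
    have "eigenvalue D mu" unfolding eigenvalue_def eigenvector_def
      by (rule exI[of _ "vec n g"]) (use gvec gne eig_mu Dc in auto)
    then show ?thesis using eigenvalue_root_char_poly[OF Dc] by simp
  qed
  have roots_le: "lam \<le> mu" if root: "poly (char_poly D) lam = 0" and lam0: "lam \<noteq> 0" for lam
  proof -
    have "eigenvalue D lam" using eigenvalue_root_char_poly[OF Dc] root by simp
    then obtain v where v: "v \<in> carrier_vec n" "v \<noteq> 0\<^sub>v n" "D *\<^sub>v v = lam \<cdot>\<^sub>v v"
      unfolding eigenvalue_def eigenvector_def using Dc by auto
    define w where "w i = v $ i" for i
    have ev: "(\<Sum>j<n. d i j * w j) = lam * w i" if "i < n" for i
      using Dv[OF v(1) that] arg_cong[OF v(3), of "\<lambda>u. u $ i"] that v(1) unfolding w_def by simp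
    have "(\<Sum>i<n. \<Sum>j<n. d i j * w j) = (\<Sum>j<n. (\<Sum>i<n. d i j) * w j)"
      by (subst sum.swap) (simp add: sum_distrib_right)
    then have "(\<Sum>i<n. lam * w i) = 0" using dcol ev by simp
    then have wsum: "(\<Sum>i<n. w i) = 0" using lam0 by (simp add: sum_distrib_left[symmetric])
    have "qf d n w = (\<Sum>i<n. w i * (lam * w i))" unfolding qf_def using ev by simp
    also have "\<dots> = lam * (\<Sum>i<n. w i * w i)" by (simp add: sum_distrib_left mult_ac)
    finally have "lam * (\<Sum>i<n. w i * w i) \<le> mu * (\<Sum>i<n. w i * w i)"
      using qfd[OF wsum] Rf[OF wsum] by simp
    moreover have "(\<Sum>i<n. w i * w i) > 0"
    proof -
      have "(\<Sum>i<n. w i * w i) \<ge> 0" by (simp add: sum_nonneg)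
      moreover have "(\<Sum>i<n. w i * w i) \<noteq> 0"
      proof
        assume "(\<Sum>i<n. w i * w i) = 0"
        then have "\<And>i. i < n \<Longrightarrow> v $ i = 0" using sum_sq_zero unfolding w_def by blast
        then have "v = 0\<^sub>v n" using v(1) by (intro eq_vecI) auto
        then show False using v(2) by simp
      qed
      ultimately show ?thesis by simp
    qed
    ultimately show ?thesis by simp
  qed
  have nok: "\<forall>i<n. u i = 0" if us: "(\<Sum>i<n. u i) = 0"
    and du: "\<And>i. i < n \<Longrightarrow> (\<Sum>j<n. d i j * u j) = 0" for u
  proof (rule ccontr)
    assume "\<not> (\<forall>i<n. u i = 0)"
    then obtain i where i: "i < n" "u i \<noteq> 0" by blast
    have une: "vec n u \<noteq> 0\<^sub>v n"
    proof
      assume "vec n u = 0\<^sub>v n"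
      then have "vec n u $ i = 0\<^sub>v n $ i" by simp
      then show False using i by simp
    qed
    have "qf d n u = 0" unfolding qf_def using du by simp
    then have qa: "qf a n u = 0" using qfd[OF us] by simp
    have o: "ones_vec n \<bullet> vec n u = 0"
      using us by (simp add: ones_vec_def scalar_prod_def atLeast0LessThan)
    have uvec: "vec n u \<in> carrier_vec n" by simp
    have "vec n u \<bullet> (A *\<^sub>v vec n u) < 0"
      using cnd o une uvec unfolding cond_neg_def_def by blast
    moreover have "qf a n (\<lambda>i. vec n u $ i) = qf a n u" by (intro qf_cong) simp
    ultimately show False using quadv[OF uvec] qa by simp
  qed
  obtain q where cp: "char_poly D = monom 1 1 * q" and q0: "poly q 0 \<noteq> 0"
    using charpoly_factor[OF Dc Dij drow dcol n0 nok] by blast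
  have lam2_eq: "lam2 = mu"
  proof -
    have qne: "q \<noteq> 0" using q0 by auto
    have "proots (char_poly D) = add_mset 0 (proots q)"
    proof -
      have "proots (char_poly D) = proots (monom 1 1 :: real poly) + proots q"
        unfolding cp by (rule proots_mult) (use qne in auto)
      moreover have "proots (monom 1 1 :: real poly) = {#0#}"
        unfolding x_as_monom[symmetric] using proots_linear_factor[of "0::real"] by simp
      ultimately show ?thesis by simp
    qed
    moreover have "\<forall>x\<in>#proots q. x \<le> mu"
    proof
      fix x assume "x \<in># proots q"
      then have "poly q x = 0" using qne by simp
      moreover then have "x \<noteq> 0" using q0 by auto
      ultimately show "x \<le> mu" using roots_le cp by simp
    qed
    moreover have "mu \<in># proots q"
    proof -
      have "poly q mu = 0" using root_mu cp mu_neg by (simp add: poly_monom)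
      then show ?thesis using qne by simp
    qed
    ultimately show ?thesis
      unfolding lam2_def eigenvalues_desc_def using desc_second mu_neg by simp
  qed
  show ?thesis
  proof (intro conjI)
    show "\<exists>x \<in> carrier_vec n. x \<bullet> ones_vec n = 0 \<and> x \<noteq> 0\<^sub>v n \<and>
            (x \<bullet> (A *\<^sub>v x)) / (x \<bullet> x) = lam2"
    proof (intro bexI[of _ "vec n g"] conjI gne gvec)
      show "vec n g \<bullet> ones_vec n = 0" using ones[OF gvec] g1 by simp
      have "vec n g \<bullet> vec n g = 1" using sqv[OF gvec] g2 by simp
      then show "vec n g \<bullet> (A *\<^sub>v vec n g) / (vec n g \<bullet> vec n g) = lam2"
        using quadv[OF gvec] gq lam2_eq unfolding mu_def by simp
    qed
    show "\<forall>x \<in> carrier_vec n. x \<bullet> ones_vec n = 0 \<and> x \<noteq> 0\<^sub>v n \<longrightarrow>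
            (x \<bullet> (A *\<^sub>v x)) / (x \<bullet> x) \<le> lam2"
    proof (intro ballI impI)
      fix x :: "real vec" assume x: "x \<in> carrier_vec n" and xc: "x \<bullet> ones_vec n = 0 \<and> x \<noteq> 0\<^sub>v n"
      have s0: "(\<Sum>i<n. x $ i) = 0" using xc ones[OF x] by simp
      have pos: "x \<bullet> x > 0"
      proof -
        have "x \<bullet> x \<ge> 0" using sqv[OF x] by (simp add: sum_nonneg)
        moreover have "x \<bullet> x \<noteq> 0"
        proof
          assume "x \<bullet> x = 0"
          then have "\<And>i. i < n \<Longrightarrow> x $ i = 0" using sum_sq_zero sqv[OF x] by metis
          then have "x = 0\<^sub>v n" using x by (intro eq_vecI) auto
          then show False using xc by simp
        qed
        ultimately show ?thesis by simp
      qed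
      have "x \<bullet> (A *\<^sub>v x) \<le> mu * (x \<bullet> x)" using Rf[OF s0] quadv[OF x] sqv[OF x] by simp
      then show "(x \<bullet> (A *\<^sub>v x)) / (x \<bullet> x) \<le> lam2" using pos lam2_eq by (simp add: field_simps)
    qed
    show "lam2 < 0" using lam2_eq mu_neg by simp
  qed
qed

end
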